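(* Let $G$ be a second countable locally compact group and $\Omega$ a homogeneous space of $G$. Let $F\subset P$ and $F\subset P'$ be closed subgroups of $G$, let $Y,Y'$ be closed subsets of $\Omega$ and let $M\subset G$. Suppose that (a) $PY=Y$ and $P'Y'=Y'$; (b) $mY\cap Y'\neq\emptyset$ for every $m\in M$; (c) $Y$ is a compact $F$-minimal subset. Then $hY\subset Y'$ for every $h\in N_G(F)\cap\overline{P'MP}$.
   Context: $N_G(F)$ denotes the normalizer of $F$ in $G$. For a closed subgroup $F\subset G$, a closed $F$-invariant subset $Y\subset\Omega$ is called $F$-minimal if it contains no proper nonempty closed $F$-invariant subset, i.e. $Fy$ is dense in $Y$ for every $y\in Y$. *)

theory Defs
  imports "HOL-Analysis.Analysis"
begin

definition topological_group ::
  "('g::topological_space \<Rightarrow> 'g \<Rightarrow> 'g) \<Rightarrow> ('g \<Rightarrow> 'g) \<Rightarrow> 'g \<Rightarrow> bool" where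
  "topological_group mul iv e \<longleftrightarrow>
     (\<forall>x y z. mul (mul x y) z = mul x (mul y z)) \<and>
     (\<forall>x. mul e x = x \<and> mul x e = x) \<and>
     (\<forall>x. mul (iv x) x = e \<and> mul x (iv x) = e) \<and>
     continuous_on UNIV (\<lambda>p. mul (fst p) (snd p)) \<and>
     continuous_on UNIV iv"

definition is_subgroup :: "('g \<Rightarrow> 'g \<Rightarrow> 'g) \<Rightarrow> ('g \<Rightarrow> 'g) \<Rightarrow> 'g \<Rightarrow> 'g set \<Rightarrow> bool" where
  "is_subgroup mul iv e H \<longleftrightarrow> e \<in> H \<and> (\<forall>x\<in>H. \<forall>y\<in>H. mul x y \<in> H) \<and> (\<forall>x\<in>H. iv x \<in> H)"

definition closed_subgroup ::
  "('g::topological_space \<Rightarrow> 'g \<Rightarrow> 'g) \<Rightarrow> ('g \<Rightarrow> 'g) \<Rightarrow> 'g \<Rightarrow> 'g set \<Rightarrow> bool" where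
  "closed_subgroup mul iv e H \<longleftrightarrow> is_subgroup mul iv e H \<and> closed H"

text \<open>A continuous action of G on the Hausdorff space 'w making it a homogeneous
  space: the action is jointly continuous and transitive, and the orbit map of a
  (hence every) point is open, so that 'w is homeomorphic to G/H with H the
  (closed) stabiliser.\<close>
definition homogeneous_space ::
  "('g::topological_space \<Rightarrow> 'g \<Rightarrow> 'g) \<Rightarrow> 'g \<Rightarrow> ('g \<Rightarrow> 'w::topological_space \<Rightarrow> 'w) \<Rightarrow> bool" where
  "homogeneous_space mul e act \<longleftrightarrow>
     (\<forall>w. act e w = w) \<and>
     (\<forall>g h w. act (mul g h) w = act g (act h w)) \<and>
     continuous_on UNIV (\<lambda>p. act (fst p) (snd p)) \<and>
     (\<forall>w v. \<exists>g. act g w = v) \<and>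
     (\<forall>w U. open U \<longrightarrow> open ((\<lambda>g. act g w) ` U))"

definition set_act :: "('g \<Rightarrow> 'w \<Rightarrow> 'w) \<Rightarrow> 'g set \<Rightarrow> 'w set \<Rightarrow> 'w set" where
  "set_act act A Y = {act g y | g y. g \<in> A \<and> y \<in> Y}"

definition invariant_set :: "('g \<Rightarrow> 'w \<Rightarrow> 'w) \<Rightarrow> 'g set \<Rightarrow> 'w set \<Rightarrow> bool" where
  "invariant_set act F Y \<longleftrightarrow> (\<forall>f\<in>F. \<forall>y\<in>Y. act f y \<in> Y)"

definition minimal_set ::
  "('g \<Rightarrow> 'w::topological_space \<Rightarrow> 'w) \<Rightarrow> 'g set \<Rightarrow> 'w set \<Rightarrow> bool" where
  "minimal_set act F Y \<longleftrightarrow> closed Y \<and> invariant_set act F Y \<and>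
     (\<forall>Z. Z \<subseteq> Y \<longrightarrow> Z \<noteq> {} \<longrightarrow> closed Z \<longrightarrow> invariant_set act F Z \<longrightarrow> Z = Y)"

definition normalizer :: "('g \<Rightarrow> 'g \<Rightarrow> 'g) \<Rightarrow> ('g \<Rightarrow> 'g) \<Rightarrow> 'g set \<Rightarrow> 'g set" where
  "normalizer mul iv F = {h. (\<lambda>f. mul (mul h f) (iv h)) ` F = F}"

definition triple_prod :: "('g \<Rightarrow> 'g \<Rightarrow> 'g) \<Rightarrow> 'g set \<Rightarrow> 'g set \<Rightarrow> 'g set \<Rightarrow> 'g set" where
  "triple_prod mul A B C = {mul (mul a b) c | a b c. a \<in> A \<and> b \<in> B \<and> c \<in> C}"

end

theory Submission
  imports Defs
begin

theorem lemma3p2: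
  fixes mul :: "'g::{t2_space, second_countable_topology} \<Rightarrow> 'g \<Rightarrow> 'g"
    and iv :: "'g \<Rightarrow> 'g" and e :: 'g
    and act :: "'g \<Rightarrow> 'w::t2_space \<Rightarrow> 'w"
    and F P P' M :: "'g set" and Y Y' :: "'w set"
  assumes G: "topological_group mul iv e"
    and lc: "locally_compact_space (euclidean :: 'g topology)"
    and hom: "homogeneous_space mul e act"
    and F: "closed_subgroup mul iv e F"
    and P: "closed_subgroup mul iv e P"
    and P': "closed_subgroup mul iv e P'"
    and FP: "F \<subseteq> P" and FP': "F \<subseteq> P'"
    and Yc: "closed Y" and Y'c: "closed Y'"
    and a1: "set_act act P Y = Y" and a2: "set_act act P' Y' = Y'"
    and b: "\<forall>m\<in>M. set_act act {m} Y \<inter> Y' \<noteq> {}"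
    and c1: "compact Y" and c2: "minimal_set act F Y"
  shows "\<forall>h \<in> normalizer mul iv F \<inter> closure (triple_prod mul P' M P).
           set_act act {h} Y \<subseteq> Y'"
proof
  fix h assume h: "h \<in> normalizer mul iv F \<inter> closure (triple_prod mul P' M P)"
  have ae: "\<And>w. act e w = w" and am: "\<And>g k w. act (mul g k) w = act g (act k w)"
    and cont: "continuous_on UNIV (\<lambda>p. act (fst p) (snd p))"
    using hom unfolding homogeneous_space_def by auto
  have ginv: "\<And>x. mul (iv x) x = e \<and> mul x (iv x) = e"
    using G unfolding topological_group_def by auto
  have aa1: "\<And>x w. act x (act (iv x) w) = w"
  proof -
    fix x w have "act x (act (iv x) w) = act (mul x (iv x)) w" by (simp add: am)
    then show "act x (act (iv x) w) = w" by (simp add: ginv ae)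
  qed
  have aa2: "\<And>x w. act (iv x) (act x w) = w"
  proof -
    fix x w have "act (iv x) (act x w) = act (mul (iv x) x) w" by (simp add: am)
    then show "act (iv x) (act x w) = w" by (simp add: ginv ae)
  qed
  have PY: "\<And>p y. p \<in> P \<Longrightarrow> y \<in> Y \<Longrightarrow> act p y \<in> Y"
    using a1 unfolding set_act_def by blast
  have PY': "\<And>p y. p \<in> P' \<Longrightarrow> y \<in> Y' \<Longrightarrow> act p y \<in> Y'"
    using a2 unfolding set_act_def by blast
  have ivP: "\<And>p. p \<in> P \<Longrightarrow> iv p \<in> P"
    using P unfolding closed_subgroup_def is_subgroup_def by auto
  define C where "C = {g. \<exists>w\<in>Y. act g w \<in> Y'}"
  have Cclosed: "closed C"
  proof -
    define W where "W = (\<lambda>p. act (fst p) (snd p)) -` (- Y')"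
    have Wo: "open W" unfolding W_def using open_vimage[OF _ cont] Y'c by auto
    have "open (- C)"
    proof (subst open_subopen, intro ballI)
      fix g assume "g \<in> - C"
      then have "{g} \<times> Y \<subseteq> W" unfolding C_def W_def by auto
      from Elementary_Topology.tube_lemma[OF c1 Wo this] obtain X0 where "g \<in> X0" "open X0" "X0 \<times> Y \<subseteq> W" by blast
      then have "X0 \<subseteq> - C" unfolding C_def W_def by auto
      with \<open>g \<in> X0\<close> \<open>open X0\<close> show "\<exists>T. open T \<and> g \<in> T \<and> T \<subseteq> - C" by blast
    qed
    then show ?thesis by (simp add: closed_open)
  qed
  have "triple_prod mul P' M P \<subseteq> C"
  proof
    fix g assume "g \<in> triple_prod mul P' M P"
    then obtain a m p where g: "g = mul (mul a m) p" "a \<in> P'" "m \<in> M" "p \<in> P"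
      unfolding triple_prod_def by blast
    from b g(3) obtain y where y: "y \<in> Y" "act m y \<in> Y'"
      unfolding set_act_def by blast
    have z: "act (iv p) y \<in> Y" using PY[OF ivP[OF g(4)] y(1)] .
    have "act g (act (iv p) y) = act a (act m y)"
      using g(1) by (simp add: am aa1 aa2)
    also have "\<dots> \<in> Y'" using PY'[OF g(2) y(2)] .
    finally show "g \<in> C" unfolding C_def using z by blast
  qed
  then have "closure (triple_prod mul P' M P) \<subseteq> C" using closure_minimal Cclosed by blast
  with h have "h \<in> C" by blast
  then obtain z where z: "z \<in> Y" "act h z \<in> Y'" unfolding C_def by blast
  define Z where "Z = Y \<inter> (act h) -` Y'"
  have cp: "continuous_on UNIV (\<lambda>w::'w. (h, w))" by (intro continuous_intros)
  have conth: "continuous_on UNIV (act h)"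
    using continuous_on_compose2[OF cont cp] by simp
  have "closed Z" unfolding Z_def using closed_vimage[OF Y'c conth] Yc by blast
  moreover have "Z \<noteq> {}" using z unfolding Z_def by blast
  moreover have "invariant_set act F Z"
    unfolding invariant_set_def
  proof (intro ballI)
    fix f y assume f: "f \<in> F" and y: "y \<in> Z"
    have hn: "(\<lambda>f. mul (mul h f) (iv h)) ` F = F" using h unfolding normalizer_def by blast
    then have k: "mul (mul h f) (iv h) \<in> F" using f by blast
    have "act h (act f y) = act (mul (mul h f) (iv h)) (act h y)"
      by (simp add: am aa1 aa2)
    also have "\<dots> \<in> Y'" using PY'[OF subsetD[OF FP' k]] y unfolding Z_def by blast
    finally show "act f y \<in> Z" using PY[OF subsetD[OF FP f]] y unfolding Z_def by blast
  qed
  moreover have "Z \<subseteq> Y" unfolding Z_def by blast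
  moreover have mm: "\<forall>Z. Z \<subseteq> Y \<longrightarrow> Z \<noteq> {} \<longrightarrow> closed Z \<longrightarrow> invariant_set act F Z \<longrightarrow> Z = Y"
    using c2 unfolding minimal_set_def by blast
  ultimately have ZY: "Z = Y" by simp
  show "set_act act {h} Y \<subseteq> Y'"
  proof
    fix x assume "x \<in> set_act act {h} Y"
    then obtain y where "y \<in> Y" "x = act h y" unfolding set_act_def by blast
    then show "x \<in> Y'" using ZY unfolding Z_def by blast
  qed
qed

end
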